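(* Assume GCH. Let $\lambda<\kappa$ be infinite cardinals with $\mathrm{cf}(\kappa)=\omega$. Then every $(\lambda,\kappa)$-graph contains an $(\aleph_0,\kappa)$-subgraph.
   Context: For infinite cardinals $\lambda<\kappa$, a $(\lambda,\kappa)$-graph is a bipartite graph with bipartition $(A,B)$, $|A|=\lambda$, $|B|=\kappa$, in which every vertex $b\in B$ has infinitely many neighbours in $A$. An $(\aleph_0,\kappa)$-subgraph of such a graph is a subgraph with bipartition $(C,D)$, $C\subseteq A$, $D\subseteq B$, which is itself an $(\aleph_0,\kappa)$-graph. *)

theory Defs
  imports Main
begin

definition GCH_on :: "'t itself \<Rightarrow> bool" where
  "GCH_on (T :: 't itself) \<longleftrightarrow> (\<forall>(X::'t set) (Y::'t set). infinite X \<and> (card_of X, card_of Y) \<in> ordLess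
                      \<longrightarrow> (card_of (Pow X), card_of Y) \<in> ordLeq)"

definition cf_omega :: "'a rel \<Rightarrow> bool" where
  "cf_omega r \<longleftrightarrow>
     (\<exists>K. K \<subseteq> Field r \<and> cofinal K r \<and> (card_of K, card_of (UNIV::nat set)) \<in> ordIso) \<and>
     (\<forall>K. K \<subseteq> Field r \<and> cofinal K r \<longrightarrow> (card_of (UNIV::nat set), card_of K) \<in> ordLeq)"

definition nbrs :: "('a \<times> 'a) set \<Rightarrow> 'a set \<Rightarrow> 'a \<Rightarrow> 'a set" where
  "nbrs E A b = {a \<in> A. (a, b) \<in> E}"

definition bip_graph_inf :: "'a set \<Rightarrow> 'a set \<Rightarrow> ('a \<times> 'a) set \<Rightarrow> bool" where
  "bip_graph_inf A B E \<longleftrightarrow> A \<inter> B = {} \<and> E \<subseteq> A \<times> B \<and> (\<forall>b\<in>B. infinite (nbrs E A b))"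

text \<open>(lambda,kappa)-graph, with lambda = |A|, kappa = |B|.\<close>
definition lk_graph :: "'a set \<Rightarrow> 'a set \<Rightarrow> ('a \<times> 'a) set \<Rightarrow> bool" where
  "lk_graph A B E \<longleftrightarrow> bip_graph_inf A B E \<and> infinite A \<and> (card_of A, card_of B) \<in> ordLess"

end

theory Submission
  imports Defs
begin

unbundle cardinal_syntax

lemma gch_step:
  assumes GCH: "GCH_on (TYPE('a set))" and inf: "infinite (A::'a set)"
    and lt: "|A| <o |S::'a set|"
  shows "|Pow A| \<le>o |S|"
proof -
  let ?X = "(\<lambda>a. {a}) ` A" and ?Y = "(\<lambda>a. {a}) ` S"
  have XA: "|?X| =o |A|"
    using card_of_ordIso[of ?X A] card_of_ordIso[of A ?X] ordIso_symmetric
    by (metis (no_types, lifting) bij_betw_imageI inj_on_def singleton_inject)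
  have YS: "|?Y| =o |S|"
    using card_of_ordIso[of S ?Y] ordIso_symmetric
    by (metis (no_types, lifting) bij_betw_imageI inj_on_def singleton_inject)
  have "infinite ?X" using inf finite_imageD[of "\<lambda>a. {a}" A] by (auto simp: inj_on_def)
  moreover have "|?X| <o |?Y|"
    using XA YS lt ordIso_ordLess_trans ordLess_ordIso_trans ordIso_symmetric by blast
  ultimately have "|Pow ?X| \<le>o |?Y|" using GCH unfolding GCH_on_def by blast
  moreover have "|Pow A| \<le>o |Pow ?X|"
  proof -
    have "inj_on (image (\<lambda>a. {a})) (Pow A)" by (auto simp: inj_on_def)
    moreover have "image (\<lambda>a. {a}) ` Pow A \<subseteq> Pow ?X" by auto
    ultimately show ?thesis using card_of_ordLeq by blast
  qed
  ultimately show ?thesis using YS ordLeq_transitive ordLeq_ordIso_trans by blast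
qed

theorem corollary4p7:
  fixes A B :: "'a set" and E :: "('a \<times> 'a) set"
  assumes GCH: "GCH_on (TYPE('a set))"
    and graph: "lk_graph A B E"
    and cf: "cf_omega (card_of B)"
  shows "\<exists>C D F. C \<subseteq> A \<and> D \<subseteq> B \<and> F \<subseteq> E \<inter> (C \<times> D) \<and>
           bip_graph_inf C D F \<and>
           (card_of C, card_of (UNIV::nat set)) \<in> ordIso \<and>
           (card_of D, card_of B) \<in> ordIso"
proof -
  define r where "r = card_of B"
  have disj: "A \<inter> B = {}" and Esub: "E \<subseteq> A \<times> B" and nb: "\<forall>b\<in>B. infinite (nbrs E A b)"
    and infA: "infinite A" and AB: "|A| <o |B|"
    using graph unfolding lk_graph_def bip_graph_inf_def by auto
  have natA: "|UNIV::nat set| \<le>o |A|" using infA infinite_iff_card_of_nat by blast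
  have natB: "|UNIV::nat set| <o |B|" using natA AB ordLeq_ordLess_trans by blast
  have infB: "infinite B" using natB ordLess_imp_ordLeq infinite_iff_card_of_nat by blast
  obtain K where KB: "K \<subseteq> B" and cof: "cofinal K r" and Knat: "|K| =o |UNIV::nat set|"
    using cf unfolding cf_omega_def r_def Field_card_of by blast
  have cofB: "\<forall>a\<in>B. \<exists>k\<in>K. a \<noteq> k \<and> (a,k) \<in> r"
    using cof unfolding cofinal_def r_def Field_card_of by blast
  have KA: "|K| \<le>o |A|" using Knat natA ordIso_ordLeq_trans by blast
  have under_lt: "\<And>k. k \<in> B \<Longrightarrow> |underS r k| <o |B|"
    using card_of_underS[of r] card_of_Card_order unfolding r_def Field_card_of by blast
  have powlt: "|Pow A| <o |B|"
  proof (rule ccontr)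
    assume "\<not> |Pow A| <o |B|"
    then have BP: "|B| \<le>o |Pow A|" using not_ordLess_iff_ordLeq[OF card_of_Well_order card_of_Well_order] by blast
    have uA: "\<forall>k\<in>K. |underS r k| \<le>o |A|"
    proof
      fix k assume "k \<in> K"
      then have u: "|underS r k| <o |B|" using under_lt KB by blast
      show "|underS r k| \<le>o |A|"
      proof (rule ccontr)
        assume "\<not> |underS r k| \<le>o |A|"
        then have "|A| <o |underS r k|" using not_ordLeq_iff_ordLess[OF card_of_Well_order card_of_Well_order] by blast
        then have "|Pow A| \<le>o |underS r k|" using gch_step[OF GCH infA] by blast
        then have "|Pow A| <o |B|" using u by (rule ordLeq_ordLess_trans)
        then have "|Pow A| <o |Pow A|" using BP by (rule ordLess_ordLeq_trans)
        then show False using ordLess_irreflexive by blast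
      qed
    qed
    have "B \<subseteq> (\<Union>k\<in>K. underS r k)" using cofB unfolding underS_def by blast
    then have "|B| \<le>o |\<Union>k\<in>K. underS r k|" by (rule card_of_mono1)
    moreover have "|\<Union>k\<in>K. underS r k| \<le>o |A|"
      using card_of_UNION_ordLeq_infinite[OF infA KA] uA by blast
    ultimately have "|B| \<le>o |A|" by (rule ordLeq_transitive)
    then show False using AB not_ordLess_ordLeq by blast
  qed
  have "\<forall>b\<in>B. \<exists>h::nat \<Rightarrow> 'a. inj h \<and> range h \<subseteq> nbrs E A b"
  proof
    fix b assume "b \<in> B"
    then have "infinite (nbrs E A b)" using nb by blast
    then show "\<exists>h::nat \<Rightarrow> 'a. inj h \<and> range h \<subseteq> nbrs E A b"
      by (rule infinite_countable_subset)
  qed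
  from bchoice[OF this] obtain f :: "'a \<Rightarrow> nat \<Rightarrow> 'a" where f: "\<forall>b\<in>B. inj (f b) \<and> range (f b) \<subseteq> nbrs E A b"
    by (elim exE)
  define N where "N b = range (f b)" for b
  define T where "T = N ` B"
  have TA: "T \<subseteq> Pow A" using f unfolding T_def N_def nbrs_def by blast
  have Tlt: "|T| <o |B|" by (rule ordLeq_ordLess_trans[OF card_of_mono1[OF TA] powlt])
  define M where "M k = (T <+> underS r k) <+> (UNIV::nat set)" for k
  have Mlt: "\<forall>k\<in>K. |M k| <o |B|"
    unfolding M_def using card_of_Plus_ordLess_infinite[OF infB card_of_Plus_ordLess_infinite[OF infB Tlt under_lt] natB] KB by blast
  have Minf: "infinite (M k)" for k
  proof
    assume "finite (M k)"
    then have "finite (Inr ` (UNIV::nat set) :: (('a set + 'a) + nat) set)"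
      unfolding M_def by (rule finite_subset[rotated]) auto
    then show False using finite_imageD by fastforce
  qed
  have ex: "\<forall>k\<in>K. \<exists>t\<in>T. |M k| <o |{b\<in>B. N b = t}|"
  proof
    fix k assume kK: "k \<in> K"
    show "\<exists>t\<in>T. |M k| <o |{b\<in>B. N b = t}|"
    proof (rule ccontr)
      assume "\<not> ?thesis"
      then have le: "\<forall>t\<in>T. |{b\<in>B. N b = t}| \<le>o |M k|"
        using not_ordLess_iff_ordLeq[OF card_of_Well_order card_of_Well_order] by blast
      have TM: "|T| \<le>o |M k|"
        unfolding M_def by (rule ordLeq_transitive[OF card_of_Plus1 card_of_Plus1])
      have "B \<subseteq> (\<Union>t\<in>T. {b\<in>B. N b = t})" unfolding T_def by blast
      then have "|B| \<le>o |\<Union>t\<in>T. {b\<in>B. N b = t}|" by (rule card_of_mono1)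
      moreover have "|\<Union>t\<in>T. {b\<in>B. N b = t}| \<le>o |M k|"
        by (rule card_of_UNION_ordLeq_infinite[OF Minf TM le])
      ultimately have "|B| \<le>o |M k|" by (rule ordLeq_transitive)
      then show False using Mlt kK not_ordLess_ordLeq by blast
    qed
  qed
  have ex': "\<forall>k\<in>K. \<exists>t. t \<in> T \<and> |M k| <o |{b\<in>B. N b = t}|" using ex by blast
  from bchoice[OF ex'] obtain g :: "'a \<Rightarrow> 'a set" where g: "\<forall>k\<in>K. g k \<in> T \<and> |M k| <o |{b\<in>B. N b = g k}|"
    by (elim exE)
  define C where "C = (\<Union>k\<in>K. g k)"
  define D where "D = (\<Union>k\<in>K. {b\<in>B. N b = g k})"
  define F where "F = E \<inter> (C \<times> D)"
  have CA: "C \<subseteq> A" using g TA unfolding C_def by blast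
  have DB: "D \<subseteq> B" unfolding D_def by blast
  have Ninf: "infinite (N b)" if "b \<in> B" for b
    using f that finite_imageD[of "f b" UNIV] unfolding N_def by auto
  have bip: "bip_graph_inf C D F"
    unfolding bip_graph_inf_def
  proof (intro conjI ballI)
    show "C \<inter> D = {}" using CA DB disj by blast
    show "F \<subseteq> C \<times> D" unfolding F_def by blast
    fix b assume bD: "b \<in> D"
    then obtain k where kK: "k \<in> K" and bB: "b \<in> B" and Nb: "N b = g k" unfolding D_def by blast
    have "N b \<subseteq> nbrs F C b"
      using f bB bD Nb kK unfolding N_def nbrs_def F_def C_def by blast
    then show "infinite (nbrs F C b)" using Ninf[OF bB] finite_subset by blast
  qed
  have Knonempty: "K \<noteq> {}"
  proof -
    obtain b where "b \<in> B" using infB by fastforce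
    then show ?thesis using cofB by blast
  qed
  have Ccard: "|C| =o |UNIV::nat set|"
  proof -
    have "\<forall>k\<in>K. |g k| \<le>o |UNIV::nat set|"
    proof
      fix k assume "k \<in> K"
      then obtain b where "g k = range (f b)" using g unfolding T_def N_def by blast
      then show "|g k| \<le>o |UNIV::nat set|" using card_of_image by metis
    qed
    moreover have "|K| \<le>o |UNIV::nat set|" using Knat by (rule ordIso_imp_ordLeq)
    ultimately have "|C| \<le>o |UNIV::nat set|" unfolding C_def
      by (intro card_of_UNION_ordLeq_infinite[OF infinite_UNIV_nat])
    moreover have "infinite C"
    proof -
      obtain k where kK: "k \<in> K" using Knonempty by blast
      then obtain b where "b \<in> B" "g k = N b" using g unfolding T_def by blast
      then have "infinite (g k)" using Ninf by auto
      moreover have "g k \<subseteq> C" using kK unfolding C_def by blast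
      ultimately show ?thesis using finite_subset by blast
    qed
    then have "|UNIV::nat set| \<le>o |C|" using infinite_iff_card_of_nat by blast
    ultimately show ?thesis by (simp add: ordIso_iff_ordLeq)
  qed
  have Dcard: "|D| =o |B|"
  proof -
    have "|D| \<le>o |B|" using card_of_mono1[OF DB] .
    moreover have "|B| \<le>o |D|"
    proof (rule ccontr)
      assume "\<not> |B| \<le>o |D|"
      then have "|D| <o |B|" using not_ordLeq_iff_ordLess[OF card_of_Well_order card_of_Well_order] by blast
      then obtain a where aB: "a \<in> B" and iso: "|D| =o Restr r (underS r a)"
        using ordLess_iff_ordIso_Restr[of "|B|" "|D|"] card_of_Well_order
        unfolding r_def Field_card_of by blast
      have "|Field |D|| \<le>o |Field (Restr r (underS r a))|"
        using card_of_mono2 ordIso_imp_ordLeq[OF iso] by blast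
      moreover have "Field (Restr r (underS r a)) \<subseteq> underS r a"
        unfolding Field_def by blast
      ultimately have Da: "|D| \<le>o |underS r a|"
        using ordLeq_transitive[OF _ card_of_mono1] unfolding Field_card_of by blast
      obtain k where kK: "k \<in> K" and ak: "a \<noteq> k" "(a,k) \<in> r" using cofB aB by blast
      have wo: "Well_order r" unfolding r_def by (rule card_of_Well_order)
      then have tr: "trans r" and an: "antisym r"
        unfolding well_order_on_def linear_order_on_def partial_order_on_def preorder_on_def
        by auto
      have "underS r a \<subseteq> underS r k"
      proof
        fix x assume "x \<in> underS r a"
        then have "x \<noteq> a" "(x,a) \<in> r" unfolding underS_def by auto
        moreover have "(x,k) \<in> r" using \<open>(x,a) \<in> r\<close> ak tr unfolding trans_def by blast
        moreover have "x \<noteq> k" using \<open>(x,a) \<in> r\<close> ak an unfolding antisym_def by blast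
        ultimately show "x \<in> underS r k" unfolding underS_def by auto
      qed
      then have "|underS r a| \<le>o |underS r k|" by (rule card_of_mono1)
      moreover have "|underS r k| \<le>o |M k|"
        unfolding M_def by (rule ordLeq_transitive[OF card_of_Plus2 card_of_Plus1])
      moreover have "|{b\<in>B. N b = g k}| \<le>o |D|"
        using kK unfolding D_def by (intro card_of_mono1) blast
      ultimately have "|{b\<in>B. N b = g k}| \<le>o |M k|"
        using Da by (meson ordLeq_transitive)
      then show False using g kK not_ordLess_ordLeq by blast
    qed
    ultimately show ?thesis by (simp add: ordIso_iff_ordLeq)
  qed
  show ?thesis
    apply (rule exI[of _ C], rule exI[of _ D], rule exI[of _ F])
    using CA DB bip Ccard Dcard unfolding F_def by blast
qed

end
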